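(* Every voting rule in the PJR-Exact family satisfies PJR: for every ballot profile $\mathcal{A}=(A_1,\dots,A_n)$ over a candidate set $C$ and every committee size $k\le |C|$, every committee $W$ that can be produced by a rule of the PJR-Exact family provides PJR for $(\mathcal{A},k)$.
   Context: Setting: voters $N=\{1,\dots,n\}$, candidates $C=\{c_1,\dots,c_m\}$, each voter $i$ submits an approval ballot $A_i\subseteq C$; $\mathcal{A}=(A_1,\dots,A_n)$; $k$ is a positive integer with $k\le |C|$. The exact quota is $q=n/k$. For $c\in C$, $N_c=\{i\in N: c\in A_i\}$. EJR/PJR: for $\ell\in\{1,\dots,k\}$, a set $N^*\subseteq N$ is $\ell$-cohesive if $|N^*|\ge \ell n/k$ and $|\bigcap_{i\in N^*}A_i|\ge \ell$. A committee $W\subseteq C$ with $|W|=k$ provides EJR (resp. PJR) for $(\mathcal{A},k)$ if for every $\ell\in\{1,\dots,k\}$ and every $\ell$-cohesive $N^*$ there is $i\in N^*$ with $|A_i\cap W|\ge \ell$ (resp. $|W\cap\bigcup_{i\in N^*}A_i|\ge \ell$). PJR-Exact family: a rule in this family is any iterative procedure that selects candidates $w_1,\dots,w_k$ one at a time, with $W_0=\emptyset$, $W_j=W_{j-1}\cup\{w_j\}$, $w_j\in C\setminus W_{j-1}$, output $W=W_k$, and maintains vote fractions $f_i^j$ ($i\in N$, $j=0,\dots,k$) with $f_i^0=1$, $0\le f_i^j\le f_i^{j-1}$, such that at every iteration $j$: (a) $f_i^j=f_i^{j-1}$ for $i\notin N_{w_j}$; (b) letting $s=\sum_{i\in N_{w_j}}f_i^{j-1}$,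 if $s>q$ then $\sum_{i\in N_{w_j}}(f_i^{j-1}-f_i^j)=q$, and if $s\le q$ then $f_i^j=0$ for all $i\in N_{w_j}$; (c) if some $c\in C\setminus W_{j-1}$ satisfies $\sum_{i\in N_c}f_i^{j-1}\ge q$, then $\sum_{i\in N_{w_j}}f_i^{j-1}\ge q$. All choices not constrained by (a)–(c) are arbitrary. *)

theory Defs
  imports Complex_Main
begin

definition voters :: "nat \<Rightarrow> nat set" where
  "voters n = {1..n}"

definition supporters :: "nat \<Rightarrow> (nat \<Rightarrow> 'c set) \<Rightarrow> 'c \<Rightarrow> nat set" where
  "supporters n A c = {i \<in> voters n. c \<in> A i}"

definition quota :: "nat \<Rightarrow> nat \<Rightarrow> real" where
  "quota n k = real n / real k"

definition prefix_committee :: "(nat \<Rightarrow> 'c) \<Rightarrow> nat \<Rightarrow> 'c set" where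
  "prefix_committee w j = w ` {1..j}"

text \<open>A run of a rule of the PJR-Exact family: selected candidates w 1..w k and
  vote fractions f j i (iteration j, voter i).\<close>
definition pjr_exact_run ::
  "nat \<Rightarrow> 'c set \<Rightarrow> (nat \<Rightarrow> 'c set) \<Rightarrow> nat \<Rightarrow> (nat \<Rightarrow> 'c) \<Rightarrow> (nat \<Rightarrow> nat \<Rightarrow> real) \<Rightarrow> bool"
where
  "pjr_exact_run n C A k w f \<longleftrightarrow>
     (\<forall>i \<in> voters n. f 0 i = 1) \<and>
     (\<forall>j \<in> {1..k}.
        w j \<in> C - prefix_committee w (j - 1) \<and>
        (\<forall>i \<in> voters n. 0 \<le> f j i \<and> f j i \<le> f (j - 1) i) \<and>
        (\<forall>i \<in> voters n - supporters n A (w j). f j i = f (j - 1) i) \<and>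
        (let s = (\<Sum>i \<in> supporters n A (w j). f (j - 1) i) in
           (s > quota n k \<longrightarrow>
              (\<Sum>i \<in> supporters n A (w j). f (j - 1) i - f j i) = quota n k) \<and>
           (s \<le> quota n k \<longrightarrow> (\<forall>i \<in> supporters n A (w j). f j i = 0))) \<and>
        ((\<exists>c \<in> C - prefix_committee w (j - 1).
            (\<Sum>i \<in> supporters n A c. f (j - 1) i) \<ge> quota n k) \<longrightarrow>
           (\<Sum>i \<in> supporters n A (w j). f (j - 1) i) \<ge> quota n k))"

definition provides_PJR :: "nat \<Rightarrow> 'c set \<Rightarrow> (nat \<Rightarrow> 'c set) \<Rightarrow> nat \<Rightarrow> 'c set \<Rightarrow> bool" where
  "provides_PJR n C A k W \<longleftrightarrow>
     W \<subseteq> C \<and> card W = k \<and>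
     (\<forall>l \<in> {1..k}. \<forall>S \<subseteq> voters n.
        (real (card S) \<ge> real l * real n / real k \<and>
         card (C \<inter> (\<Inter>i \<in> S. A i)) \<ge> l) \<longrightarrow>
        card (W \<inter> (\<Union>i \<in> S. A i)) \<ge> l)"

end

theory Submission
  imports Defs
begin

lemma sum_diff_le_nonneg:
  fixes g h :: "nat \<Rightarrow> real"
  assumes "finite N" "S' \<subseteq> N" "\<forall>i\<in>N. h i \<le> g i"
  shows "(\<Sum>i\<in>S'. g i - h i) \<le> (\<Sum>i\<in>N. g i - h i)"
  using assms by (intro sum_mono2) auto

theorem mainTheorem1:
  fixes n k :: nat and C :: "'c set" and A :: "nat \<Rightarrow> 'c set"
    and w :: "nat \<Rightarrow> 'c" and f :: "nat \<Rightarrow> nat \<Rightarrow> real"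
  assumes "finite C"
    and "1 \<le> n"
    and "0 < k" and "k \<le> card C"
    and "\<forall>i \<in> voters n. A i \<subseteq> C"
    and "pjr_exact_run n C A k w f"
  shows "provides_PJR n C A k (prefix_committee w k)"
proof -
  define q where "q = quota n k"
  define V where "V = voters n"
  define W where "W = prefix_committee w k"
  define N where "N = (\<lambda>c. supporters n A c)"
  have finV: "finite V" unfolding V_def voters_def by simp
  have NV: "N c \<subseteq> V" for c unfolding N_def V_def supporters_def by auto
  have finN: "finite (N c)" for c using NV finV finite_subset by blast
  have qpos: "q > 0" unfolding q_def quota_def using assms(2,3) by simp
  have f0: "\<forall>i\<in>V. f 0 i = 1" using assms(6) unfolding pjr_exact_run_def V_def by auto
  have step: "\<And>j. j \<in> {1..k} \<Longrightarrow>
        w j \<in> C - prefix_committee w (j - 1) \<and>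
        (\<forall>i \<in> V. 0 \<le> f j i \<and> f j i \<le> f (j - 1) i) \<and>
        (\<forall>i \<in> V - N (w j). f j i = f (j - 1) i) \<and>
        ((\<Sum>i \<in> N (w j). f (j - 1) i) > q \<longrightarrow>
              (\<Sum>i \<in> N (w j). f (j - 1) i - f j i) = q) \<and>
        ((\<Sum>i \<in> N (w j). f (j - 1) i) \<le> q \<longrightarrow> (\<forall>i \<in> N (w j). f j i = 0)) \<and>
        ((\<exists>c \<in> C - prefix_committee w (j - 1).
            (\<Sum>i \<in> N c. f (j - 1) i) \<ge> q) \<longrightarrow>
           (\<Sum>i \<in> N (w j). f (j - 1) i) \<ge> q)"
    using assms(6) unfolding pjr_exact_run_def V_def N_def q_def Let_def by blast
  have nonneg: "\<forall>i\<in>V. 0 \<le> f j i" if "j \<le> k" for j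
  proof (cases "j = 0")
    case True then show ?thesis using f0 by simp
  next
    case False then show ?thesis using step[of j] that by auto
  qed
  have dec_le: "(\<Sum>i\<in>N (w j). f (j - 1) i - f j i) \<le> q" if "j \<in> {1..k}" for j
  proof (cases "(\<Sum>i \<in> N (w j). f (j - 1) i) > q")
    case True then show ?thesis using step[OF that] by simp
  next
    case False
    then have "\<forall>i \<in> N (w j). f j i = 0" using step[OF that] by simp
    then have "(\<Sum>i\<in>N (w j). f (j - 1) i - f j i) = (\<Sum>i \<in> N (w j). f (j - 1) i)"
      by (intro sum.cong) auto
    then show ?thesis using False by simp
  qed
  have dec_eq: "(\<Sum>i\<in>N (w j). f (j - 1) i - f j i) = q"
    if "j \<in> {1..k}" "(\<Sum>i \<in> N (w j). f (j - 1) i) \<ge> q" for j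
  proof (cases "(\<Sum>i \<in> N (w j). f (j - 1) i) > q")
    case True then show ?thesis using step[OF that(1)] by simp
  next
    case False
    then have "\<forall>i \<in> N (w j). f j i = 0" using step[OF that(1)] by simp
    then have "(\<Sum>i\<in>N (w j). f (j - 1) i - f j i) = (\<Sum>i \<in> N (w j). f (j - 1) i)"
      by (intro sum.cong) auto
    then show ?thesis using False that(2) by simp
  qed
  have pre_sub: "prefix_committee w j \<subseteq> W" if "j \<le> k" for j
    unfolding W_def prefix_committee_def using that by auto
  have inj: "inj_on w {1..k}"
  proof (rule inj_onI)
    fix a b assume ab: "a \<in> {1..k}" "b \<in> {1..k}" "w a = w b"
    show "a = b"
    proof (rule ccontr)
      assume "a \<noteq> b"
      then consider "a < b" | "b < a" by linarith
      then show False
      proof cases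
        case 1
        then have "a \<in> {1..b-1}" using ab by auto
        then have "w a \<in> prefix_committee w (b - 1)" unfolding prefix_committee_def by blast
        then show False using step[OF ab(2)] ab(3) by auto
      next
        case 2
        then have "b \<in> {1..a-1}" using ab by auto
        then have "w b \<in> prefix_committee w (a - 1)" unfolding prefix_committee_def by blast
        then show False using step[OF ab(1)] ab(3) by auto
      qed
    qed
  qed
  have cardW: "card W = k" unfolding W_def prefix_committee_def using card_image[OF inj] by simp
  have WC: "W \<subseteq> C" unfolding W_def prefix_committee_def using step by auto
  have PJR: "card (W \<inter> (\<Union>i \<in> S. A i)) \<ge> l"
    if l: "l \<in> {1..k}" and SV: "S \<subseteq> V" and big: "real (card S) \<ge> real l * real n / real k"
      and com: "card (C \<inter> (\<Inter>i \<in> S. A i)) \<ge> l" for l S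
  proof (rule ccontr)
    assume "\<not> ?thesis"
    then have small: "card (W \<inter> (\<Union>i \<in> S. A i)) \<le> l - 1" by simp
    define U where "U = (\<Union>i \<in> S. A i)"
    have finS: "finite S" using SV finV finite_subset by blast
    have bigq: "real (card S) \<ge> real l * q" using big unfolding q_def quota_def by simp
    have "real l * q > 0" using qpos l by simp
    then have Sne: "S \<noteq> {}" using bigq by auto
    have "\<exists>c. c \<in> C \<inter> (\<Inter>i \<in> S. A i) \<and> c \<notin> W"
    proof (rule ccontr)
      assume "\<not> ?thesis"
      then have "C \<inter> (\<Inter>i \<in> S. A i) \<subseteq> W \<inter> U" unfolding U_def using Sne by auto
      moreover have "finite (W \<inter> U)" using WC assms(1) finite_subset by blast
      ultimately have "card (C \<inter> (\<Inter>i \<in> S. A i)) \<le> card (W \<inter> U)" by (rule card_mono[rotated])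
      then show False using small com l unfolding U_def by (simp, linarith)
    qed
    then obtain c where c: "c \<in> C" "\<forall>i\<in>S. c \<in> A i" "c \<notin> W" by auto
    have SNc: "S \<subseteq> N c" using SV c(2) unfolding N_def V_def supporters_def voters_def by auto
    define B where "B = {j \<in> {1..k}. w j \<in> U}"
    have "w ` B = W \<inter> U" unfolding B_def W_def prefix_committee_def by auto
    moreover have "inj_on w B" using inj unfolding B_def by (rule inj_on_subset) auto
    ultimately have cardB: "card B = card (W \<inter> U)" using card_image by metis
    have cardBl: "card B \<le> l - 1" using cardB small unfolding U_def by simp
    define D where "D = (\<lambda>j. \<Sum>i\<in>S. f j i)"
    have Dbound: "j \<le> k \<Longrightarrow> D j \<ge> real (card S) - q * real (card (B \<inter> {1..j}))" for j
    proof (induction j)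
      case 0
      have "(\<Sum>i\<in>S. f 0 i) = (\<Sum>i\<in>S. 1)" using f0 SV by (intro sum.cong) auto
      then show ?case unfolding D_def by simp
    next
      case (Suc j)
      have jk: "Suc j \<in> {1..k}" using Suc.prems by simp
      have IH: "D j \<ge> real (card S) - q * real (card (B \<inter> {1..j}))" using Suc by simp
      have Dd: "D (Suc j) = D j - (\<Sum>i\<in>S. f j i - f (Suc j) i)"
        unfolding D_def by (simp add: sum_subtractf)
      show ?case
      proof (cases "Suc j \<in> B")
        case True
        have "B \<inter> {1..Suc j} = insert (Suc j) (B \<inter> {1..j})" using True by auto
        then have cB: "card (B \<inter> {1..Suc j}) = card (B \<inter> {1..j}) + 1" by simp
        have "(\<Sum>i\<in>S. f j i - f (Suc j) i) = (\<Sum>i\<in>S \<inter> N (w (Suc j)). f j i - f (Suc j) i)"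
        proof (rule sum.mono_neutral_right[OF finS])
          show "S \<inter> N (w (Suc j)) \<subseteq> S" by auto
          have st: "\<forall>i \<in> V - N (w (Suc j)). f (Suc j) i = f j i" using step[OF jk] by simp
          show "\<forall>i\<in>S - S \<inter> N (w (Suc j)). f j i - f (Suc j) i = 0"
          proof
            fix i assume "i \<in> S - S \<inter> N (w (Suc j))"
            then have "i \<in> V - N (w (Suc j))" using SV by auto
            then show "f j i - f (Suc j) i = 0" using st by simp
          qed
        qed
        also have "\<dots> \<le> (\<Sum>i\<in>N (w (Suc j)). f j i - f (Suc j) i)"
          by (rule sum_diff_le_nonneg[OF finN]) (use step[OF jk] NV in auto)
        also have "\<dots> \<le> q" using dec_le[OF jk] by simp
        finally show ?thesis using Dd IH cB by (simp add: algebra_simps)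
      next
        case False
        have "B \<inter> {1..Suc j} = B \<inter> {1..j}" using False by (auto simp: le_Suc_eq)
        moreover have "(\<Sum>i\<in>S. f j i - f (Suc j) i) = 0"
        proof (rule sum.neutral, rule ballI)
          fix i assume i: "i \<in> S"
          have "w (Suc j) \<notin> A i" using False jk i unfolding B_def U_def by auto
          then have "i \<in> V - N (w (Suc j))" using i SV unfolding N_def supporters_def V_def by auto
          then show "f j i - f (Suc j) i = 0" using step[OF jk] by simp
        qed
        ultimately show ?thesis using Dd IH by simp
      qed
    qed
    have Dq: "D j \<ge> q" if "j \<le> k" for j
    proof -
      have "card (B \<inter> {1..j}) \<le> card B" by (rule card_mono) (auto simp: B_def)
      then have "card (B \<inter> {1..j}) \<le> l - 1" using cardBl by simp
      then have "real (card (B \<inter> {1..j})) \<le> real l - 1" using l by auto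
      then have "q * real (card (B \<inter> {1..j})) \<le> q * (real l - 1)"
        using qpos by (intro mult_left_mono) auto
      then show ?thesis using Dbound[OF that] bigq by (simp add: algebra_simps)
    qed
    define T where "T = (\<lambda>j. \<Sum>i\<in>V. f j i)"
    have Tval: "j \<le> k \<Longrightarrow> T j = real n - q * real j" for j
    proof (induction j)
      case 0
      then show ?case unfolding T_def using f0 by (simp add: V_def voters_def)
    next
      case (Suc j)
      have jk: "Suc j \<in> {1..k}" using Suc.prems by simp
      have IH: "T j = real n - q * real j" using Suc by simp
      have Td: "T (Suc j) = T j - (\<Sum>i\<in>V. f j i - f (Suc j) i)"
        unfolding T_def by (simp add: sum_subtractf)
      have cnot: "c \<in> C - prefix_committee w j" using c pre_sub[of j] Suc.prems by auto
      have "(\<Sum>i\<in>N c. f j i) \<ge> D j"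
        unfolding D_def
        by (rule sum_mono2[OF finN SNc]) (use nonneg[of j] Suc.prems NV in auto)
      then have "(\<Sum>i\<in>N c. f j i) \<ge> q" using Dq[of j] Suc.prems by simp
      then have ge: "(\<Sum>i\<in>N (w (Suc j)). f j i) \<ge> q" using step[OF jk] cnot by auto
      have "(\<Sum>i\<in>V. f j i - f (Suc j) i) = (\<Sum>i\<in>N (w (Suc j)). f j i - f (Suc j) i)"
      proof (rule sum.mono_neutral_right[OF finV NV])
        have st: "\<forall>i \<in> V - N (w (Suc j)). f (Suc j) i = f j i" using step[OF jk] by simp
        then show "\<forall>i\<in>V - N (w (Suc j)). f j i - f (Suc j) i = 0" by simp
      qed
      also have "\<dots> = q" using dec_eq[OF jk] ge by simp
      finally show ?case using Td IH by (simp add: algebra_simps)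
    qed
    have "T k = 0" using Tval[of k] assms(3) unfolding q_def quota_def by simp
    moreover have "T k \<ge> D k" unfolding T_def D_def
      by (rule sum_mono2[OF finV SV]) (use nonneg[of k] in auto)
    ultimately show False using Dq[of k] qpos by simp
  qed
  show ?thesis unfolding provides_PJR_def
    using PJR WC cardW unfolding W_def V_def by blast
qed

end
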